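(* Let $\mathcal{A}$ be a non-unital normed algebra possessing an approximate identity, and let $\mathcal{I}_r(\mathcal{A})$ denote the set of all closed proper right ideals of $\mathcal{A}$. Then $$\mathrm{AppInv}_r(\mathcal{A})=\mathcal{A}\setminus\bigcup_{I\in\mathcal{I}_r(\mathcal{A})} I .$$
   Context: An approximate identity in a normed algebra $\mathcal{A}$ is a net $(e_j)_{j\in J}$ in $\mathcal{A}$ such that $\lim_{j} e_j y=\lim_j y e_j=y$ for every $y\in\mathcal{A}$. An element $x\in\mathcal{A}$ is approximately right invertible if there is a net $(r_j)_{j\in J}$ in $\mathcal{A}$ such that $(xr_j)_{j\in J}$ is an approximate identity in $\mathcal{A}$. $\mathrm{AppInv}_r(\mathcal{A})$ denotes the set of approximately right invertible elements of $\mathcal{A}$. *)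

theory Defs
  imports Complex_Main
begin

definition directed :: "'j set \<Rightarrow> ('j \<Rightarrow> 'j \<Rightarrow> bool) \<Rightarrow> bool" where
  "directed J le \<longleftrightarrow> J \<noteq> {} \<and> (\<forall>i\<in>J. le i i) \<and>
     (\<forall>i\<in>J. \<forall>j\<in>J. \<forall>k\<in>J. le i j \<longrightarrow> le j k \<longrightarrow> le i k) \<and>
     (\<forall>i\<in>J. \<forall>j\<in>J. \<exists>k\<in>J. le i k \<and> le j k)"

definition net_tendsto :: "'j set \<Rightarrow> ('j \<Rightarrow> 'j \<Rightarrow> bool) \<Rightarrow> ('j \<Rightarrow> 'a::metric_space) \<Rightarrow> 'a \<Rightarrow> bool" where
  "net_tendsto J le f l \<longleftrightarrow> (\<forall>\<epsilon>>0. \<exists>j0\<in>J. \<forall>j\<in>J. le j0 j \<longrightarrow> dist (f j) l < \<epsilon>)"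

definition approx_identity :: "'j set \<Rightarrow> ('j \<Rightarrow> 'j \<Rightarrow> bool) \<Rightarrow> ('j \<Rightarrow> 'a::real_normed_algebra) \<Rightarrow> bool" where
  "approx_identity J le e \<longleftrightarrow>
     (\<forall>y. net_tendsto J le (\<lambda>j. e j * y) y \<and> net_tendsto J le (\<lambda>j. y * e j) y)"

text \<open>Index type for nets over the algebra 'a. Every net in 'a can be reindexed
  (via its tail filter) by a directed subset of this type, so no generality is lost.\<close>
type_synonym 'a net_index = "'a set \<times> 'a"

definition has_approx_identity :: "'a::real_normed_algebra itself \<Rightarrow> bool" where
  "has_approx_identity _ \<longleftrightarrow>
     (\<exists>(J :: 'a net_index set) le (e :: 'a net_index \<Rightarrow> 'a). directed J le \<and> approx_identity J le e)"

definition AppInv_r :: "'a::real_normed_algebra set" where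
  "AppInv_r = {x. \<exists>(J :: 'a net_index set) le (r :: 'a net_index \<Rightarrow> 'a).
                    directed J le \<and> approx_identity J le (\<lambda>j. x * r j)}"

definition right_ideal :: "'a::real_normed_algebra set \<Rightarrow> bool" where
  "right_ideal I \<longleftrightarrow> 0 \<in> I \<and> (\<forall>x\<in>I. \<forall>y\<in>I. x + y \<in> I) \<and>
     (\<forall>c::real. \<forall>x\<in>I. c *\<^sub>R x \<in> I) \<and> (\<forall>x\<in>I. \<forall>a. x * a \<in> I)"

definition closed_proper_right_ideals :: "'a::real_normed_algebra set set" where
  "closed_proper_right_ideals = {I. right_ideal I \<and> closed I \<and> I \<noteq> UNIV}"

end

theory Submission
  imports Defs "HOL-Analysis.Analysis"
begin

lemma finite_net:
  assumes d: "directed J le" and ai: "approx_identity J le e" and F: "finite F" and eps: "\<epsilon> > 0"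
  shows "\<exists>j0\<in>J. \<forall>j\<in>J. le j0 j \<longrightarrow> (\<forall>y\<in>F. dist (e j * y) y < \<epsilon> \<and> dist (y * e j) y < \<epsilon>)"
  using F
proof (induction F rule: finite_induct)
  case empty
  from d obtain j0 where "j0 \<in> J" unfolding directed_def by blast
  then show ?case by blast
next
  case (insert y F)
  from insert.IH obtain j1 where j1: "j1 \<in> J" "\<forall>j\<in>J. le j1 j \<longrightarrow> (\<forall>y\<in>F. dist (e j * y) y < \<epsilon> \<and> dist (y * e j) y < \<epsilon>)" by blast
  from ai eps obtain j2 where j2: "j2 \<in> J" "\<forall>j\<in>J. le j2 j \<longrightarrow> dist (e j * y) y < \<epsilon>"
    unfolding approx_identity_def net_tendsto_def by blast
  from ai eps obtain j3 where j3: "j3 \<in> J" "\<forall>j\<in>J. le j3 j \<longrightarrow> dist (y * e j) y < \<epsilon>"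
    unfolding approx_identity_def net_tendsto_def by blast
  from d j1 j2 obtain k1 where k1: "k1 \<in> J" "le j1 k1" "le j2 k1" unfolding directed_def by blast
  from d k1 j3 obtain k where k: "k \<in> J" "le k1 k" "le j3 k" unfolding directed_def by blast
  have tr: "\<And>a b c. a \<in> J \<Longrightarrow> b \<in> J \<Longrightarrow> c \<in> J \<Longrightarrow> le a b \<Longrightarrow> le b c \<Longrightarrow> le a c"
    using d unfolding directed_def by blast
  show ?case
  proof (intro bexI[of _ k] ballI impI)
    fix j z assume j: "j \<in> J" "le k j" and z: "z \<in> insert y F"
    have kj: "le k1 j" using tr[OF k1(1) k(1) j(1)] k j by blast
    have "le j1 j" using tr[OF j1(1) k1(1) j(1)] k1 kj by blast
    moreover have "le j2 j" using tr[OF j2(1) k1(1) j(1)] k1 kj by blast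
    moreover have "le j3 j" using tr[OF j3(1) k(1) j(1)] k j by blast
    ultimately
    show "dist (e j * z) z < \<epsilon> \<and> dist (z * e j) z < \<epsilon>"
      using z j1 j2 j3 j by auto
  qed (use k in auto)
qed

lemma closed_ideal_all:
  fixes x :: "'a::real_normed_algebra"
  assumes x: "x \<in> AppInv_r" and I: "right_ideal I" "closed I" and xI: "x \<in> I"
  shows "I = UNIV"
proof -
  from x obtain J :: "'a net_index set" and le r where d: "directed J le"
    and ai: "approx_identity J le (\<lambda>j. x * r j)" unfolding AppInv_r_def by blast
  have "y \<in> I" for y
  proof -
    have "y \<in> closure I"
    proof (subst closure_approachable, intro allI impI)
      fix \<epsilon> :: real assume "\<epsilon> > 0"
      with ai obtain j0 where j0: "j0 \<in> J" "\<forall>j\<in>J. le j0 j \<longrightarrow> dist (x * r j * y) y < \<epsilon>"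
        unfolding approx_identity_def net_tendsto_def by blast
      have "le j0 j0" using d j0 unfolding directed_def by blast
      hence "dist (x * r j0 * y) y < \<epsilon>" using j0 by blast
      moreover have "x * r j0 * y \<in> I" using I(1) xI unfolding right_ideal_def
        by (metis mult.assoc)
      ultimately show "\<exists>z\<in>I. dist z y < \<epsilon>" by blast
    qed
    thus ?thesis using I(2) by simp
  qed
  thus ?thesis by auto
qed

theorem theorem2p10:
  assumes nonunital: "\<not> (\<exists>u::'a::real_normed_algebra. \<forall>y. u * y = y \<and> y * u = y)"
    and approx: "has_approx_identity TYPE('a)"
  shows "(AppInv_r :: 'a set) = UNIV - \<Union> closed_proper_right_ideals"
proof (intro set_eqI iffI)
  fix x :: 'a assume "x \<in> AppInv_r"
  thus "x \<in> UNIV - \<Union> closed_proper_right_ideals"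
    using closed_ideal_all unfolding closed_proper_right_ideals_def by blast
next
  fix x :: 'a assume xn: "x \<in> UNIV - \<Union> closed_proper_right_ideals"
  from approx obtain J :: "'a net_index set" and le and e :: "'a net_index \<Rightarrow> 'a" where d: "directed J le"
    and ai: "approx_identity J le e" unfolding has_approx_identity_def by blast
  define S where "S = closure (range (\<lambda>a. x * a))"
  have ri: "right_ideal S"
    unfolding right_ideal_def
  proof (intro conjI ballI allI)
    show "0 \<in> S" unfolding S_def by (metis closure_subset mult_zero_right rangeI subsetD)
  next
    fix u v assume u: "u \<in> S" and v: "v \<in> S"
    show "u + v \<in> S" unfolding S_def
    proof (subst closure_approachable, intro allI impI)
      fix \<epsilon> :: real assume ep: "\<epsilon> > 0"
      obtain p where p: "p \<in> range (\<lambda>a. x * a)" "dist p u < \<epsilon>/2"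
        using u ep unfolding S_def closure_approachable by (meson half_gt_zero)
      obtain q where q: "q \<in> range (\<lambda>a. x * a)" "dist q v < \<epsilon>/2"
        using v ep unfolding S_def closure_approachable by (meson half_gt_zero)
      from p q obtain a b where "p = x * a" "q = x * b" by blast
      hence "p + q \<in> range (\<lambda>a. x * a)" by (metis distrib_left rangeI)
      moreover have "dist (p + q) (u + v) < \<epsilon>"
        using p q dist_triangle_add[of p q u v] by linarith
      ultimately show "\<exists>y\<in>range (\<lambda>a. x * a). dist y (u + v) < \<epsilon>" by blast
    qed
  next
    fix c :: real and u assume u: "u \<in> S"
    show "c *\<^sub>R u \<in> S" unfolding S_def
    proof (subst closure_approachable, intro allI impI)
      fix \<epsilon> :: real assume ep: "\<epsilon> > 0"
      have ep2: "\<epsilon> / (\<bar>c\<bar> + 1) > 0" using ep by simp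
      obtain p where p: "p \<in> range (\<lambda>a. x * a)" "dist p u < \<epsilon> / (\<bar>c\<bar> + 1)"
        using u ep2 unfolding S_def closure_approachable by blast
      from p obtain a where pa: "p = x * a" by blast
      hence "c *\<^sub>R p \<in> range (\<lambda>a. x * a)" by (metis mult_scaleR_right rangeI)
      moreover have "dist (c *\<^sub>R p) (c *\<^sub>R u) < \<epsilon>"
      proof -
        have "dist (c *\<^sub>R p) (c *\<^sub>R u) = \<bar>c\<bar> * dist p u"
          by (simp add: dist_norm flip: scaleR_diff_right)
        also have "\<dots> \<le> (\<bar>c\<bar> + 1) * dist p u" by (simp add: mult_right_mono)
        also have "\<dots> < (\<bar>c\<bar> + 1) * (\<epsilon> / (\<bar>c\<bar> + 1))"
          using p(2) by (intro mult_strict_left_mono) auto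
        also have "\<dots> = \<epsilon>" by simp
        finally show ?thesis .
      qed
      ultimately show "\<exists>y\<in>range (\<lambda>a. x * a). dist y (c *\<^sub>R u) < \<epsilon>" by blast
    qed
  next
    fix u b assume u: "u \<in> S"
    show "u * b \<in> S" unfolding S_def
    proof (subst closure_approachable, intro allI impI)
      fix \<epsilon> :: real assume ep: "\<epsilon> > 0"
      have ep2: "\<epsilon> / (norm b + 1) > 0" using ep by (simp add: add_nonneg_pos)
      obtain p where p: "p \<in> range (\<lambda>a. x * a)" "dist p u < \<epsilon> / (norm b + 1)"
        using u ep2 unfolding S_def closure_approachable by blast
      from p obtain a where pa: "p = x * a" by blast
      hence "p * b \<in> range (\<lambda>a. x * a)" by (metis mult.assoc rangeI)
      moreover have "dist (p * b) (u * b) < \<epsilon>"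
      proof -
        have "dist (p * b) (u * b) = norm ((p - u) * b)"
          by (simp add: dist_norm left_diff_distrib)
        also have "\<dots> \<le> dist p u * norm b" by (simp add: dist_norm norm_mult_ineq)
        also have "\<dots> \<le> dist p u * (norm b + 1)" by (simp add: mult_left_mono)
        also have "\<dots> < (\<epsilon> / (norm b + 1)) * (norm b + 1)"
          using p(2) by (intro mult_strict_right_mono) (auto intro: add_nonneg_pos)
        also have "\<dots> = \<epsilon>" using norm_ge_zero[of b] by (simp del: norm_ge_zero)
        finally show ?thesis .
      qed
      ultimately show "\<exists>y\<in>range (\<lambda>a. x * a). dist y (u * b) < \<epsilon>" by blast
    qed
  qed
  have xS: "x \<in> S" unfolding S_def
  proof (subst closure_approachable, intro allI impI)
    fix \<epsilon> :: real assume "\<epsilon> > 0"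
    with ai obtain j0 where j0: "j0 \<in> J" "\<forall>j\<in>J. le j0 j \<longrightarrow> dist (x * e j) x < \<epsilon>"
      unfolding approx_identity_def net_tendsto_def by blast
    have "le j0 j0" using d j0 unfolding directed_def by blast
    thus "\<exists>y\<in>range (\<lambda>a. x * a). dist y x < \<epsilon>" using j0 by blast
  qed
  have SU: "S = UNIV"
    using xn xS ri unfolding closed_proper_right_ideals_def S_def by auto
  have dense: "\<exists>a. dist (x * a) w < \<delta>" if "\<delta> > 0" for w \<delta>
  proof -
    have "w \<in> closure (range (\<lambda>a. x * a))" using SU S_def by auto
    thus ?thesis using that unfolding closure_approachable by blast
  qed
  obtain a0 :: 'a where a0: "a0 \<noteq> 0" using nonunital by (metis mult_zero_left)
  define J' :: "'a net_index set" where "J' = {(F, z). finite F \<and> z \<noteq> 0}"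
  define le' :: "'a net_index \<Rightarrow> 'a net_index \<Rightarrow> bool"
    where "le' = (\<lambda>(F, z) (G, w). F \<subseteq> G \<and> norm w \<le> norm z)"
  have d': "directed J' le'"
    unfolding directed_def
  proof (intro conjI ballI impI)
    show "J' \<noteq> {}" using a0 unfolding J'_def by auto
  next
    fix i assume "i \<in> J'" thus "le' i i" unfolding le'_def by auto
  next
    fix i j k assume "le' i j" "le' j k" thus "le' i k" unfolding le'_def by auto
  next
    fix i j assume i: "i \<in> J'" and j: "j \<in> J'"
    obtain F z G w where ij: "i = (F, z)" "j = (G, w)" by fastforce
    show "\<exists>k\<in>J'. le' i k \<and> le' j k"
      by (rule bexI[of _ "(F \<union> G, if norm z \<le> norm w then z else w)"])
         (use i j ij in \<open>auto simp: J'_def le'_def\<close>)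
  qed
  have choose: "\<exists>r. \<forall>y\<in>F. dist (x * r * y) y < norm z \<and> dist (y * (x * r)) y < norm z"
    if "(F, z) \<in> J'" for F z
  proof -
    from that have F: "finite F" and z: "norm z > 0" unfolding J'_def by auto
    define M where "M = (\<Sum>y\<in>F. norm y) + 1"
    have M: "M > 0" "\<And>y. y \<in> F \<Longrightarrow> norm y \<le> M"
    proof -
      show "M > 0" unfolding M_def by (simp add: add_nonneg_pos sum_nonneg)
      fix y assume "y \<in> F"
      hence "norm y \<le> (\<Sum>y\<in>F. norm y)" using F by (intro member_le_sum) auto
      thus "norm y \<le> M" unfolding M_def by simp
    qed
    obtain j0 where j0: "j0 \<in> J" "\<forall>j\<in>J. le j0 j \<longrightarrow> (\<forall>y\<in>F. dist (e j * y) y < norm z / 2 \<and> dist (y * e j) y < norm z / 2)"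
      using finite_net[OF d ai F, of "norm z / 2"] z by auto
    have "le j0 j0" using d j0 unfolding directed_def by blast
    hence ej: "\<forall>y\<in>F. dist (e j0 * y) y < norm z / 2 \<and> dist (y * e j0) y < norm z / 2"
      using j0 by blast
    obtain r where r: "dist (x * r) (e j0) < norm z / (2 * M)"
      using dense[of "norm z / (2 * M)" "e j0"] z M by auto
    have small: "norm (x * r - e j0) * norm y < norm z / 2" if "y \<in> F" for y
    proof -
      have "norm (x * r - e j0) * norm y \<le> norm (x * r - e j0) * M"
        using M(2)[OF that] by (simp add: mult_left_mono)
      also have "\<dots> < norm z / (2 * M) * M"
        using r M by (intro mult_strict_right_mono) (auto simp: dist_norm)
      also have "\<dots> = norm z / 2" using M by simp
      finally show ?thesis .
    qed
    show ?thesis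
    proof (intro exI[of _ r] ballI conjI)
      fix y assume y: "y \<in> F"
      have eq1: "x * r * y - y = (x * r - e j0) * y + (e j0 * y - y)" by (simp add: algebra_simps)
      have "dist (x * r * y) y \<le> norm ((x * r - e j0) * y) + dist (e j0 * y) y"
        unfolding dist_norm eq1 by (rule norm_triangle_ineq)
      also have "\<dots> \<le> norm (x * r - e j0) * norm y + dist (e j0 * y) y"
        by (simp add: norm_mult_ineq)
      also have "\<dots> < norm z" using small[OF y] ej y by auto
      finally show "dist (x * r * y) y < norm z" .
      have eq2: "y * (x * r) - y = y * (x * r - e j0) + (y * e j0 - y)" by (simp add: algebra_simps)
      have "dist (y * (x * r)) y \<le> norm (y * (x * r - e j0)) + dist (y * e j0) y"
        unfolding dist_norm eq2 by (rule norm_triangle_ineq)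
      also have "\<dots> \<le> norm (x * r - e j0) * norm y + dist (y * e j0) y"
        using norm_mult_ineq[of y "x * r - e j0"] by (simp add: mult.commute)
      also have "\<dots> < norm z" using small[OF y] ej y by auto
      finally show "dist (y * (x * r)) y < norm z" .
    qed
  qed
  define r' :: "'a net_index \<Rightarrow> 'a" where
    "r' = (\<lambda>(F, z). SOME r. \<forall>y\<in>F. dist (x * r * y) y < norm z \<and> dist (y * (x * r)) y < norm z)"
  have r': "\<forall>y\<in>F. dist (x * r' (F, z) * y) y < norm z \<and> dist (y * (x * r' (F, z))) y < norm z"
    if "(F, z) \<in> J'" for F z
    unfolding r'_def using someI_ex[OF choose[OF that]] by simp
  have "approx_identity J' le' (\<lambda>j. x * r' j)"
    unfolding approx_identity_def net_tendsto_def
  proof (intro allI conjI impI)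
    fix y :: 'a and \<epsilon> :: real assume ep: "\<epsilon> > 0"
    define z where "z = (\<epsilon> / norm a0) *\<^sub>R a0"
    have nz: "norm z = \<epsilon>" using a0 ep by (simp add: z_def)
    have j0: "({y}, z) \<in> J'" using nz ep unfolding J'_def by auto
    have *: "dist (x * r' j * y) y < \<epsilon> \<and> dist (y * (x * r' j)) y < \<epsilon>"
      if "j \<in> J'" "le' ({y}, z) j" for j
    proof -
      obtain G w where j: "j = (G, w)" by fastforce
      with that have "y \<in> G" "norm w \<le> \<epsilon>" unfolding le'_def using nz by auto
      with r'[of G w] that j show ?thesis by fastforce
    qed
    show "\<exists>j0\<in>J'. \<forall>j\<in>J'. le' j0 j \<longrightarrow> dist (x * r' j * y) y < \<epsilon>"
      using * j0 by blast
    show "\<exists>j0\<in>J'. \<forall>j\<in>J'. le' j0 j \<longrightarrow> dist (y * (x * r' j)) y < \<epsilon>"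
      using * j0 by blast
  qed
  with d' show "x \<in> AppInv_r" unfolding AppInv_r_def by blast
qed

end
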